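(* Let $G=\mathbb{Z}_2\times\mathbb{Z}_4$, let $\theta$ be a normalised orthomorphism of $G$, let $A_{22}=\{x\}$, put $y=\theta(x)$, and let $a\in A_{44}\setminus\theta(A_{44})$. Then $\theta$ has one of the following forms (in cycle notation): (i) $\theta=(a,\ ax,\ axy,\ xy,\ ay,\ x,\ y)$, where $xy=a^2$; (ii) $\theta=(a,\ ax,\ axy,\ xy)(y,\ ay,\ x)$, where $xy\neq a^2$; (iii) $\theta=(a,\ ax,\ axy,\ x,\ y)(ay,\ xy)$, where $xy\neq a^2$; (iv) $\theta=(a,\ ax,\ axy,\ x,\ y,\ ay,\ xy)$, where $xy=a^2$. Moreover, the number of normalised orthomorphisms of $G$ is $48$.
   Context: $G$ is written multiplicatively with identity $e$; $o(g)$ is the order of $g$. A normalised orthomorphism of $G$ is a bijection $\theta\colon G\to G$ with $\theta(e)=e$ such that $x\mapsto x^{-1}\theta(x)$ is also a bijection of $G$. For such $\theta$: $A_{44}=\{g: o(g)=4, o(\theta(g))=4\}$, $A_{22}=\{g: o(g)=2, o(\theta(g))=2\}$; $\theta(S)$ denotes the image of a set $S$. Cycle notation $(c_1,\dots,c_k)$ means $c_i\mapsto c_{i+1}$ and $c_k\mapsto c_1$; elements not listed (here only $e$) are fixed. *)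

theory Defs
  imports "HOL-Library.Numeral_Type" "HOL-Library.Product_Plus" "HOL-Combinatorics.Cycles"
begin

text \<open>The group G = Z_2 x Z_4, written additively (identity 0, product x y is x + y,
  inverse of x is - x).\<close>
type_synonym G = "2 \<times> 4"

definition gord :: "G \<Rightarrow> nat" where
  "gord g = (LEAST n::nat. 0 < n \<and> (((+) g) ^^ n) 0 = 0)"

definition norm_orthomorphism :: "(G \<Rightarrow> G) \<Rightarrow> bool" where
  "norm_orthomorphism \<theta> \<longleftrightarrow> bij \<theta> \<and> \<theta> 0 = 0 \<and> bij (\<lambda>x. - x + \<theta> x)"

definition A44 :: "(G \<Rightarrow> G) \<Rightarrow> G set" where
  "A44 \<theta> = {g. gord g = 4 \<and> gord (\<theta> g) = 4}"

definition A22 :: "(G \<Rightarrow> G) \<Rightarrow> G set" where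
  "A22 \<theta> = {g. gord g = 2 \<and> gord (\<theta> g) = 2}"

end

theory Submission
  imports Defs
begin

definition addn :: "nat \<Rightarrow> nat \<Rightarrow> nat" where
  "addn m n = 4 * ((m div 4 + n div 4) mod 2) + (m mod 4 + n mod 4) mod 4"
definition negn :: "nat \<Rightarrow> nat" where
  "negn m = 4 * (m div 4) + (4 - m mod 4) mod 4"
definition gn :: "nat \<Rightarrow> nat" where
  "gn k = (if k = 0 then 1 else if odd k then 4 else 2)"
definition okn :: "nat list \<Rightarrow> bool" where
  "okn L = distinct (map (\<lambda>k. addn (negn k) (L!k)) [0..<8])"
function gen :: "nat \<Rightarrow> nat list \<Rightarrow> nat list \<Rightarrow> nat list list" where
  "gen k vs ds = (if 8 \<le> k then [rev vs] else
     concat (map (\<lambda>v. if v \<in> set vs \<or> addn (negn k) v \<in> set ds then []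
        else gen (Suc k) (v # vs) (addn (negn k) v # ds)) [1..<8]))"
  by pat_completeness auto
termination by (relation "measure (\<lambda>(k,_,_). 8 - k)") auto
declare gen.simps[simp del]
definition ORTH :: "nat list list" where "ORTH = gen 1 [0] [0]"
definition good :: "nat list \<Rightarrow> bool" where
  "good L = (length L = 8 \<and> L!0 = 0 \<and> distinct L \<and> list_all (\<lambda>v. v < 8) L \<and> okn L)"
definition concl :: "nat list \<Rightarrow> nat \<Rightarrow> nat \<Rightarrow> bool" where
 "concl L i j = (let y = L!i in
      (list_all (\<lambda>k. L!k = cycle_of_list [j, addn j i, addn (addn j i) y, addn i y, addn j y, i, y] k) [0..<8] \<and> addn i y = addn j j)
    \<or> (list_all (\<lambda>k. L!k = (cycle_of_list [j, addn j i, addn (addn j i) y, addn i y] \<circ> cycle_of_list [y, addn j y, i]) k) [0..<8] \<and> addn i y \<noteq> addn j j)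
    \<or> (list_all (\<lambda>k. L!k = (cycle_of_list [j, addn j i, addn (addn j i) y, i, y] \<circ> cycle_of_list [addn j y, addn i y]) k) [0..<8] \<and> addn i y \<noteq> addn j j)
    \<or> (list_all (\<lambda>k. L!k = cycle_of_list [j, addn j i, addn (addn j i) y, i, y, addn j y, addn i y] k) [0..<8] \<and> addn i y = addn j j))"
definition c1 :: "nat list \<Rightarrow> nat \<Rightarrow> bool" where
 "c1 L i = list_all (\<lambda>k. (gn k = 2 \<and> gn (L!k) = 2) = (k = i)) [0..<8]"
definition c2 :: "nat list \<Rightarrow> nat \<Rightarrow> bool" where
 "c2 L j = (gn j = 4 \<and> gn (L!j) = 4 \<and> \<not> list_ex (\<lambda>k. gn k = 4 \<and> gn (L!k) = 4 \<and> L!k = j) [0..<8])"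
definition check :: "nat list \<Rightarrow> bool" where
 "check L = list_all (\<lambda>i. if c1 L i then list_all (\<lambda>j. if c2 L j then concl L i j else True) [0..<8] else True) [0..<8]"
lemma c1: "length ORTH = 48 \<and> distinct ORTH" by code_simp
lemma c2: "list_all good ORTH" by code_simp
lemma c3: "list_all check ORTH" by code_simp

definition dec :: "nat \<Rightarrow> G" where "dec n = (of_nat (n div 4), of_nat (n mod 4))"

lemma lt8: "(k::nat) < 8 \<longleftrightarrow> k \<in> {0,1,2,3,4,5,6,7}" by auto

lemma UNIV2: "(x::2) \<in> {0,1}"
proof (cases x rule: bit0_cases)
  case (of_int z) then have "z = 0 \<or> z = 1" by auto
  then show ?thesis using of_int by auto
qed
lemma UNIV4: "(x::4) \<in> {0,1,2,3}"
proof (cases x rule: bit0_cases)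
  case (of_int z) then have "z = 0 \<or> z = 1 \<or> z = 2 \<or> z = 3" by auto
  then show ?thesis using of_int by auto
qed

lemma dec_inj: "m < 8 \<Longrightarrow> n < 8 \<Longrightarrow> dec m = dec n \<longleftrightarrow> m = n"
  unfolding lt8 by (auto simp: dec_def)

lemma dec_surj: "\<exists>k<8. dec k = g"
proof -
  obtain a b where g: "g = (a,b)" by (cases g)
  have "a \<in> {0,1}" "b \<in> {0,1,2,3}" using UNIV2 UNIV4 by auto
  then show ?thesis unfolding g
    apply (auto simp: dec_def)
    apply (rule exI[of _ 0]; simp)
    apply (rule exI[of _ 1]; simp)
    apply (rule exI[of _ 2]; simp)
    apply (rule exI[of _ 3]; simp)
    apply (rule exI[of _ 4]; simp)
    apply (rule exI[of _ 5]; simp)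
    apply (rule exI[of _ 6]; simp)
    apply (rule exI[of _ 7]; simp)
    done
qed

lemma dec_add: "m < 8 \<Longrightarrow> n < 8 \<Longrightarrow> dec (addn m n) = dec m + dec n \<and> addn m n < 8"
  unfolding lt8 by (auto simp: dec_def addn_def)

lemma dec_neg: "m < 8 \<Longrightarrow> dec (negn m) = - dec m \<and> negn m < 8"
  unfolding lt8 by (auto simp: dec_def negn_def)

lemma dec0: "dec 0 = 0" by (simp add: dec_def zero_prod_def)


lemma leastI4: assumes "P (4::nat)" "\<not> P 1" "\<not> P 2" "\<not> P 3" shows "(LEAST n. 0 < n \<and> P n) = 4"
proof (rule Least_equality)
  show "0 < (4::nat) \<and> P 4" using assms by simp
  fix y assume "0 < y \<and> P y"
  then show "4 \<le> y" using assms by (cases "y \<ge> 4") (auto simp: not_le less_Suc_eq numeral_eq_Suc)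
qed
lemma leastI2: assumes "P (2::nat)" "\<not> P 1" shows "(LEAST n. 0 < n \<and> P n) = 2"
proof (rule Least_equality)
  show "0 < (2::nat) \<and> P 2" using assms by simp
  fix y assume "0 < y \<and> P y"
  then show "2 \<le> y" using assms by (cases "y \<ge> 2") (auto simp: not_le less_Suc_eq numeral_eq_Suc)
qed
lemma leastI1: assumes "P (1::nat)" shows "(LEAST n. 0 < n \<and> P n) = Suc 0"
  by (rule Least_equality) (use assms in auto)

lemma pw: "((+) g ^^ 1) 0 = g" "((+) g ^^ 2) 0 = g + g" "((+) g ^^ 3) 0 = g + g + g"
   "((+) g ^^ 4) 0 = g + g + g + g" for g :: G
  by (simp_all add: numeral_eq_Suc add.assoc)

lemma gord_dec: "m < 8 \<Longrightarrow> gord (dec m) = gn m"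
  unfolding lt8 gord_def
  apply (elim insertE emptyE; hypsubst; simp only: gn_def; simp)
  apply (rule leastI1; simp add: pw; simp add: dec_def zero_prod_def)
  apply (rule leastI4; simp add: pw; simp add: dec_def zero_prod_def)
  apply (rule leastI2; simp add: pw; simp add: dec_def zero_prod_def)
  apply (rule leastI4; simp add: pw; simp add: dec_def zero_prod_def)
  apply (rule leastI2; simp add: pw; simp add: dec_def zero_prod_def)
  apply (rule leastI4; simp add: pw; simp add: dec_def zero_prod_def)
  apply (rule leastI2; simp add: pw; simp add: dec_def zero_prod_def)
  apply (rule leastI4; simp add: pw; simp add: dec_def zero_prod_def)
  done


lemma gen_complete:
  "good L \<Longrightarrow> 1 \<le> k \<Longrightarrow> k \<le> 8 \<Longrightarrow> rev vs = take k L \<Longrightarrow>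
   set ds = (\<lambda>j. addn (negn j) (L!j)) ` {..<k} \<Longrightarrow> L \<in> set (gen k vs ds)"
proof (induction k vs ds rule: gen.induct)
  case (1 k vs ds)
  have len: "length L = 8" and L0: "L!0 = 0" and dL: "distinct L" and lt: "\<forall>v\<in>set L. v < 8"
    and ok: "distinct (map (\<lambda>k. addn (negn k) (L!k)) [0..<8])"
    using "1.prems"(1) by (auto simp: good_def okn_def list_all_iff)
  show ?case
  proof (cases "8 \<le> k")
    case True
    then have "k = 8" using "1.prems" by simp
    then show ?thesis using "1.prems" len by (subst gen.simps) simp
  next
    case False
    define v where "v = L!k"
    have k8: "k < 8" using False by simp
    have vlt: "v < 8" using lt len k8 by (auto simp: v_def)
    have v0: "v \<noteq> 0"
    proof
      assume "v = 0"
      then have "L!k = L!0" using L0 v_def by simp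
      then have "k = 0" using dL len k8 by (simp add: nth_eq_iff_index_eq)
      then show False using "1.prems" by simp
    qed
    have vvs: "v \<notin> set vs"
    proof
      assume "v \<in> set vs"
      then have "v \<in> set (take k L)" using "1.prems"(4) by (metis set_rev)
      then obtain j where j: "j < k" "take k L ! j = v" using k8 len
        by (auto simp: in_set_conv_nth)
      then have "L!j = L!k" using v_def by simp
      then have "j = k" using dL len k8 j by (simp add: nth_eq_iff_index_eq)
      then show False using j by simp
    qed
    have dds: "addn (negn k) v \<notin> set ds"
    proof
      assume "addn (negn k) v \<in> set ds"
      then obtain j where j: "j < k" "addn (negn j) (L!j) = addn (negn k) (L!k)"
        using "1.prems"(5) v_def by auto
      have "j = k" using nth_eq_iff_index_eq[OF ok, of j k] j k8 by simp
      then show False using j by simp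
    qed
    have IH: "L \<in> set (gen (Suc k) (v # vs) (addn (negn k) v # ds))"
    proof (rule "1.IH"[OF False _ _ "1.prems"(1)])
      show "v \<in> set [1..<8]" using vlt v0 by simp
      show "\<not> (v \<in> set vs \<or> addn (negn k) v \<in> set ds)" using vvs dds by simp
      show "1 \<le> Suc k" "Suc k \<le> 8" using k8 by auto
      show "rev (v # vs) = take (Suc k) L" using "1.prems"(4) k8 len
        by (simp add: take_Suc_conv_app_nth v_def)
      show "set (addn (negn k) v # ds) = (\<lambda>j. addn (negn j) (L ! j)) ` {..<Suc k}"
        using "1.prems"(5) by (simp add: lessThan_Suc v_def)
    qed
    show ?thesis using False IH vvs dds vlt v0
      by (subst gen.simps) (auto intro!: bexI[of _ v])
  qed
qed

lemma good_in_ORTH: "good L \<Longrightarrow> L \<in> set ORTH"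
proof -
  assume g: "good L"
  then have len: "length L = 8" and L0: "L!0 = 0" by (auto simp: good_def)
  have t: "take 1 L = [L!0]" using len by (cases L) auto
  have a0: "addn (negn 0) 0 = 0" by (simp add: addn_def negn_def)
  have s: "{..<(1::nat)} = {0}" by auto
  show ?thesis unfolding ORTH_def
    by (rule gen_complete[OF g]) (use t L0 a0 s in auto)
qed


definition enc :: "G \<Rightarrow> nat" where "enc g = (SOME k. k < 8 \<and> dec k = g)"
lemma enc_props: "enc g < 8 \<and> dec (enc g) = g"
  unfolding enc_def by (rule someI_ex) (use dec_surj in blast)
lemma enc_lt: "enc g < 8" using enc_props by blast
lemma dec_enc[simp]: "dec (enc g) = g" using enc_props by blast
lemma enc_dec[simp]: "k < 8 \<Longrightarrow> enc (dec k) = k"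
  using enc_props[of "dec k"] dec_inj by blast

definition fun_of :: "nat list \<Rightarrow> G \<Rightarrow> G" where "fun_of L g = dec (L ! enc g)"

lemma c2': "L \<in> set ORTH \<Longrightarrow> good L" using c2 by (simp add: list_all_iff)

lemma good_lt: "good L \<Longrightarrow> k < 8 \<Longrightarrow> L!k < 8"
  by (auto simp: good_def list_all_iff)

lemma inj_bij: "inj (f :: G \<Rightarrow> G) \<Longrightarrow> bij f"
  by (simp add: bij_def finite_UNIV_inj_surj)

lemma enc_inj: "enc g = enc h \<Longrightarrow> g = h" by (metis dec_enc)

lemma norm_fun_of: assumes "good L" shows "norm_orthomorphism (fun_of L)"
proof -
  have len: "length L = 8" and L0: "L!0 = 0" and dL: "distinct L"
    and ok: "distinct (map (\<lambda>k. addn (negn k) (L!k)) [0..<8])"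
    using assms by (auto simp: good_def okn_def)
  have e0: "enc 0 = 0" using enc_dec[of 0] dec0 by simp
  have "inj (fun_of L)"
  proof
    fix g h assume "fun_of L g = fun_of L h"
    then have "L ! enc g = L ! enc h"
      using dec_inj good_lt[OF assms] enc_lt by (simp add: fun_of_def)
    then have "enc g = enc h" using dL len enc_lt by (simp add: nth_eq_iff_index_eq)
    then show "g = h" by (rule enc_inj)
  qed
  moreover have "fun_of L 0 = 0" by (simp add: fun_of_def e0 L0 dec0)
  moreover have "inj (\<lambda>x. - x + fun_of L x)"
  proof
    fix g h assume "- g + fun_of L g = - h + fun_of L h"
    moreover have "- g + fun_of L g = dec (addn (negn (enc g)) (L ! enc g))" for g
      using dec_add dec_neg good_lt[OF assms] enc_lt by (simp add: fun_of_def)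
    ultimately have "dec (addn (negn (enc g)) (L ! enc g)) = dec (addn (negn (enc h)) (L ! enc h))"
      by simp
    then have "addn (negn (enc g)) (L ! enc g) = addn (negn (enc h)) (L ! enc h)"
      using dec_inj dec_add dec_neg good_lt[OF assms] enc_lt by metis
    then have "map (\<lambda>k. addn (negn k) (L!k)) [0..<8] ! enc g = map (\<lambda>k. addn (negn k) (L!k)) [0..<8] ! enc h"
      using enc_lt by simp
    then have "enc g = enc h" using nth_eq_iff_index_eq[OF ok] enc_lt by simp
    then show "g = h" by (rule enc_inj)
  qed
  ultimately show ?thesis by (simp add: norm_orthomorphism_def inj_bij)
qed

lemma norm_ex: assumes "norm_orthomorphism \<theta>" shows "\<exists>L\<in>set ORTH. \<theta> = fun_of L"
proof -
  have bt: "bij \<theta>" and t0: "\<theta> 0 = 0" and bd: "bij (\<lambda>x. - x + \<theta> x)"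
    using assms by (auto simp: norm_orthomorphism_def)
  define L where "L = map (\<lambda>k. enc (\<theta> (dec k))) [0..<8]"
  have len: "length L = 8" by (simp add: L_def)
  have Lk: "k < 8 \<Longrightarrow> L!k = enc (\<theta> (dec k))" for k by (simp add: L_def)
  have "good L" unfolding good_def
  proof (intro conjI)
    show "length L = 8" by (rule len)
    show "L!0 = 0" using Lk[of 0] t0 dec0 enc_dec[of 0] by simp
    show "distinct L" unfolding distinct_conv_nth
    proof (intro allI impI)
      fix p q assume "p < length L" "q < length L" "p \<noteq> q"
      then show "L!p \<noteq> L!q" using len Lk bij_is_inj[OF bt] dec_inj
        by (metis dec_enc injD)
    qed
    show "list_all (\<lambda>v. v < 8) L" by (simp add: L_def list_all_iff enc_lt)
    show "okn L" unfolding okn_def distinct_conv_nth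
    proof (intro allI impI)
      fix p q assume pq: "p < length (map (\<lambda>k. addn (negn k) (L ! k)) [0..<8])"
        "q < length (map (\<lambda>k. addn (negn k) (L ! k)) [0..<8])" "p \<noteq> q"
      then have p8: "p < 8" and q8: "q < 8" by auto
      have dd: "dec (addn (negn k) (L!k)) = - dec k + \<theta> (dec k)" if "k < 8" for k
        using dec_add dec_neg that Lk enc_lt by simp
      have ne: "- dec p + \<theta> (dec p) \<noteq> - dec q + \<theta> (dec q)"
        using bij_is_inj[OF bd] dec_inj p8 q8 pq(3) by (metis (no_types, lifting) injD)
      have "addn (negn p) (L!p) \<noteq> addn (negn q) (L!q)" using dd[OF p8] dd[OF q8] ne by metis
      then show "map (\<lambda>k. addn (negn k) (L ! k)) [0..<8] ! p \<noteq> map (\<lambda>k. addn (negn k) (L ! k)) [0..<8] ! q"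
        using p8 q8 by simp
    qed
  qed
  moreover have "\<theta> = fun_of L"
    by (rule ext) (simp add: fun_of_def Lk enc_lt)
  ultimately show ?thesis using good_in_ORTH by blast
qed

lemma fun_of_inj: "inj_on fun_of (set ORTH)"
proof
  fix L M assume L: "L \<in> set ORTH" and M: "M \<in> set ORTH" and e: "fun_of L = fun_of M"
  have gL: "good L" and gM: "good M" using L M c2' by auto
  show "L = M"
  proof (rule nth_equalityI)
    show "length L = length M" using gL gM by (simp add: good_def)
    fix k assume "k < length L"
    then have k8: "k < 8" using gL by (simp add: good_def)
    have "fun_of L (dec k) = fun_of M (dec k)" using e by simp
    then show "L!k = M!k" using k8 dec_inj good_lt gL gM by (simp add: fun_of_def)
  qed
qed

lemma card48: "card {\<theta>::G \<Rightarrow> G. norm_orthomorphism \<theta>} = 48"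
proof -
  have "{\<theta>::G \<Rightarrow> G. norm_orthomorphism \<theta>} = fun_of ` set ORTH"
    using norm_ex norm_fun_of c2' by blast
  then have "card {\<theta>::G \<Rightarrow> G. norm_orthomorphism \<theta>} = card (set ORTH)"
    using fun_of_inj by (simp add: card_image)
  also have "\<dots> = 48" using c1 distinct_card by metis
  finally show ?thesis .
qed


lemma transpose_dec: "a < 8 \<Longrightarrow> b < 8 \<Longrightarrow> k < 8 \<Longrightarrow>
  transpose (dec a) (dec b) (dec k) = dec (transpose a b k) \<and> transpose a b k < 8"
  by (auto simp: transpose_def dec_inj)

lemma cyc_dec: "\<forall>z\<in>set xs. z < 8 \<Longrightarrow> k < 8 \<Longrightarrow>
  cycle_of_list xs k < 8 \<and> cycle_of_list (map dec xs) (dec k) = dec (cycle_of_list xs k)"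
proof (induction xs arbitrary: k rule: cycle_of_list.induct)
  case (1 i j cs)
  then have IH: "cycle_of_list (j # cs) k < 8 \<and> cycle_of_list (map dec (j # cs)) (dec k) = dec (cycle_of_list (j # cs) k)"
    by simp
  then show ?case using transpose_dec "1.prems" by simp
qed auto

lemma fun_eq1: assumes "\<forall>z\<in>set ns. z < 8" "list_all (\<lambda>k. L!k = cycle_of_list ns k) [0..<8]"
  shows "fun_of L = cycle_of_list (map dec ns)"
proof
  fix g
  have "fun_of L g = dec (cycle_of_list ns (enc g))"
    using assms(2) enc_lt by (simp add: fun_of_def list_all_iff)
  also have "\<dots> = cycle_of_list (map dec ns) g" using cyc_dec[OF assms(1) enc_lt] by simp
  finally show "fun_of L g = cycle_of_list (map dec ns) g" .
qed

lemma fun_eq2: assumes "\<forall>z\<in>set ns. z < 8" "\<forall>z\<in>set ms. z < 8"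
  "list_all (\<lambda>k. L!k = (cycle_of_list ns \<circ> cycle_of_list ms) k) [0..<8]"
  shows "fun_of L = cycle_of_list (map dec ns) \<circ> cycle_of_list (map dec ms)"
proof
  fix g
  have "fun_of L g = dec (cycle_of_list ns (cycle_of_list ms (enc g)))"
    using assms(3) enc_lt by (simp add: fun_of_def list_all_iff)
  also have "\<dots> = cycle_of_list (map dec ns) (cycle_of_list (map dec ms) g)"
    using cyc_dec[OF assms(1)] cyc_dec[OF assms(2) enc_lt] by simp
  finally show "fun_of L g = (cycle_of_list (map dec ns) \<circ> cycle_of_list (map dec ms)) g" by simp
qed

lemma part1:
  assumes L: "L \<in> set ORTH" and A: "A22 (fun_of L) = {x}"
    and a: "a \<in> A44 (fun_of L) - fun_of L ` A44 (fun_of L)"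
  shows "let \<theta> = fun_of L; y = \<theta> x in
               (\<theta> = cycle_of_list [a, a + x, a + x + y, x + y, a + y, x, y] \<and> x + y = a + a)
             \<or> (\<theta> = cycle_of_list [a, a + x, a + x + y, x + y] \<circ> cycle_of_list [y, a + y, x]
                  \<and> x + y \<noteq> a + a)
             \<or> (\<theta> = cycle_of_list [a, a + x, a + x + y, x, y] \<circ> cycle_of_list [a + y, x + y]
                  \<and> x + y \<noteq> a + a)
             \<or> (\<theta> = cycle_of_list [a, a + x, a + x + y, x, y, a + y, x + y] \<and> x + y = a + a)"
proof -
  have g: "good L" using c2' L by blast
  have ch: "check L" using c3 L by (simp add: list_all_iff)
  define i where "i = enc x"
  define j where "j = enc a"
  have i8: "i < 8" and j8: "j < 8" using enc_lt i_def j_def by auto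
  have xi: "x = dec i" and aj: "a = dec j" by (simp_all add: i_def j_def)
  have fk: "k < 8 \<Longrightarrow> fun_of L (dec k) = dec (L!k)" for k by (simp add: fun_of_def)
  have Lk: "k < 8 \<Longrightarrow> L!k < 8" for k using good_lt[OF g] .
  have gk: "k < 8 \<Longrightarrow> gord (fun_of L (dec k)) = gn (L!k)" for k using fk Lk gord_dec by simp
  have cond1: "c1 L i"
    unfolding c1_def list_all_iff
  proof
    fix k assume "k \<in> set [0..<8]"
    then have k8: "k < 8" by simp
    have "(dec k \<in> A22 (fun_of L)) = (dec k = x)" using A by blast
    then show "(gn k = 2 \<and> gn (L!k) = 2) = (k = i)"
      using k8 i8 gk gord_dec xi dec_inj by (simp add: A22_def)
  qed
  have A44k: "k < 8 \<Longrightarrow> (dec k \<in> A44 (fun_of L)) = (gn k = 4 \<and> gn (L!k) = 4)" for k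
    using gk gord_dec by (simp add: A44_def)
  have cond2: "c2 L j" unfolding c2_def
  proof (intro conjI)
    show "gn j = 4" "gn (L!j) = 4" using a A44k[OF j8] aj by auto
    show "\<not> list_ex (\<lambda>k. gn k = 4 \<and> gn (L!k) = 4 \<and> L!k = j) [0..<8]"
    proof
      assume "list_ex (\<lambda>k. gn k = 4 \<and> gn (L!k) = 4 \<and> L!k = j) [0..<8]"
      then obtain k where k: "k < 8" "gn k = 4" "gn (L!k) = 4" "L!k = j" by (auto simp: list_ex_iff)
      then have "dec k \<in> A44 (fun_of L)" using A44k by simp
      moreover have "fun_of L (dec k) = a" using k fk aj by simp
      ultimately show False using a by blast
    qed
  qed
  have cc: "concl L i j"
  proof -
    have "(if c1 L i then list_all (\<lambda>j. if c2 L j then concl L i j else True) [0..<8] else True)"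
      using ch i8 unfolding check_def list_all_iff by simp
    then have "list_all (\<lambda>j. if c2 L j then concl L i j else True) [0..<8]" using cond1 by simp
    then have "(if c2 L j then concl L i j else True)" using j8 unfolding list_all_iff by simp
    then show ?thesis using cond2 by simp
  qed
  define yi where "yi = L!i"
  have y8: "yi < 8" using Lk i8 yi_def by simp
  have y: "fun_of L x = dec yi" using fk i8 xi yi_def by simp
  have D:
    "(list_all (\<lambda>k. L!k = cycle_of_list [j, addn j i, addn (addn j i) yi, addn i yi, addn j yi, i, yi] k) [0..<8] \<and> addn i yi = addn j j)
    \<or> (list_all (\<lambda>k. L!k = (cycle_of_list [j, addn j i, addn (addn j i) yi, addn i yi] \<circ> cycle_of_list [yi, addn j yi, i]) k) [0..<8] \<and> addn i yi \<noteq> addn j j)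
    \<or> (list_all (\<lambda>k. L!k = (cycle_of_list [j, addn j i, addn (addn j i) yi, i, yi] \<circ> cycle_of_list [addn j yi, addn i yi]) k) [0..<8] \<and> addn i yi \<noteq> addn j j)
    \<or> (list_all (\<lambda>k. L!k = cycle_of_list [j, addn j i, addn (addn j i) yi, i, yi, addn j yi, addn i yi] k) [0..<8] \<and> addn i yi = addn j j)"
    using cc unfolding concl_def Let_def yi_def .
  have ji: "addn j i < 8" "addn (addn j i) yi < 8" "addn i yi < 8" "addn j yi < 8" "addn j j < 8"
    using dec_add i8 j8 y8 by auto
  have ex: "dec (addn j i) = a + x" "dec (addn (addn j i) yi) = a + x + dec yi"
    "dec (addn i yi) = x + dec yi" "dec (addn j yi) = a + dec yi"
    using dec_add i8 j8 y8 ji xi aj by auto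
  have eqv: "(addn i yi = addn j j) = (x + dec yi = a + a)"
    using dec_inj[OF ji(3) ji(5)] dec_add i8 j8 y8 xi aj by auto
  have xs: "x = dec i" "a = dec j" by (fact xi, fact aj)
  from D show ?thesis
  proof (elim disjE conjE)
    assume h: "list_all (\<lambda>k. L!k = cycle_of_list [j, addn j i, addn (addn j i) yi, addn i yi, addn j yi, i, yi] k) [0..<8]"
      "addn i yi = addn j j"
    have "fun_of L = cycle_of_list (map dec [j, addn j i, addn (addn j i) yi, addn i yi, addn j yi, i, yi])"
      by (rule fun_eq1[OF _ h(1)]) (use ji i8 j8 y8 in auto)
    then show ?thesis unfolding Let_def y using h(2) eqv ex xs by simp
  next
    assume h: "list_all (\<lambda>k. L!k = (cycle_of_list [j, addn j i, addn (addn j i) yi, addn i yi] \<circ> cycle_of_list [yi, addn j yi, i]) k) [0..<8]"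
      "addn i yi \<noteq> addn j j"
    have "fun_of L = cycle_of_list (map dec [j, addn j i, addn (addn j i) yi, addn i yi]) \<circ> cycle_of_list (map dec [yi, addn j yi, i])"
      by (rule fun_eq2[OF _ _ h(1)]) (use ji i8 j8 y8 in auto)
    then show ?thesis unfolding Let_def y using h(2) eqv ex xs by simp
  next
    assume h: "list_all (\<lambda>k. L!k = (cycle_of_list [j, addn j i, addn (addn j i) yi, i, yi] \<circ> cycle_of_list [addn j yi, addn i yi]) k) [0..<8]"
      "addn i yi \<noteq> addn j j"
    have "fun_of L = cycle_of_list (map dec [j, addn j i, addn (addn j i) yi, i, yi]) \<circ> cycle_of_list (map dec [addn j yi, addn i yi])"
      by (rule fun_eq2[OF _ _ h(1)]) (use ji i8 j8 y8 in auto)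
    then show ?thesis unfolding Let_def y using h(2) eqv ex xs by simp
  next
    assume h: "list_all (\<lambda>k. L!k = cycle_of_list [j, addn j i, addn (addn j i) yi, i, yi, addn j yi, addn i yi] k) [0..<8]"
      "addn i yi = addn j j"
    have "fun_of L = cycle_of_list (map dec [j, addn j i, addn (addn j i) yi, i, yi, addn j yi, addn i yi])"
      by (rule fun_eq1[OF _ h(1)]) (use ji i8 j8 y8 in auto)
    then show ?thesis unfolding Let_def y using h(2) eqv ex xs by simp
  qed
qed

theorem theorem1:
  shows "(\<forall>(\<theta>::G \<Rightarrow> G) x a.
            norm_orthomorphism \<theta> \<and> A22 \<theta> = {x} \<and> a \<in> A44 \<theta> - \<theta> ` A44 \<theta> \<longrightarrow>
            (let y = \<theta> x in
               (\<theta> = cycle_of_list [a, a + x, a + x + y, x + y, a + y, x, y] \<and> x + y = a + a)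
             \<or> (\<theta> = cycle_of_list [a, a + x, a + x + y, x + y] \<circ> cycle_of_list [y, a + y, x]
                  \<and> x + y \<noteq> a + a)
             \<or> (\<theta> = cycle_of_list [a, a + x, a + x + y, x, y] \<circ> cycle_of_list [a + y, x + y]
                  \<and> x + y \<noteq> a + a)
             \<or> (\<theta> = cycle_of_list [a, a + x, a + x + y, x, y, a + y, x + y] \<and> x + y = a + a)))
         \<and> card {\<theta>::G \<Rightarrow> G. norm_orthomorphism \<theta>} = 48"
proof (intro conjI allI impI card48)
  fix \<theta> :: "G \<Rightarrow> G" and x a
  assume h: "norm_orthomorphism \<theta> \<and> A22 \<theta> = {x} \<and> a \<in> A44 \<theta> - \<theta> ` A44 \<theta>"
  then obtain L where L: "L \<in> set ORTH" "\<theta> = fun_of L" using norm_ex by blast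
  show "let y = \<theta> x in
               (\<theta> = cycle_of_list [a, a + x, a + x + y, x + y, a + y, x, y] \<and> x + y = a + a)
             \<or> (\<theta> = cycle_of_list [a, a + x, a + x + y, x + y] \<circ> cycle_of_list [y, a + y, x]
                  \<and> x + y \<noteq> a + a)
             \<or> (\<theta> = cycle_of_list [a, a + x, a + x + y, x, y] \<circ> cycle_of_list [a + y, x + y]
                  \<and> x + y \<noteq> a + a)
             \<or> (\<theta> = cycle_of_list [a, a + x, a + x + y, x, y, a + y, x + y] \<and> x + y = a + a)"
    using part1[OF L(1)] h unfolding L(2) Let_def by blast
qed

end
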